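(* For every $\gamma\in F(L)$ and $x_0\in\{x,y\}$, one has $\partial_{x_0}(\gamma)\in L$.
   Context: $A=\mathbb{R}\langle x,y\rangle$; $L\subset A$ is the free Lie algebra on $x,y$. $\operatorname{tr}$ is the projection $A\to A/\operatorname{span}\{ab-ba\}$. $F(L)$ is the quotient of $L\otimes L$ by the span of $a\otimes b-b\otimes a$ and $a\otimes[b,c]-[a,b]\otimes c$, regarded as a subspace of $A/\operatorname{span}\{ab-ba\}$ via $a\otimes b\mapsto\operatorname{tr}(ab)$ (an injective map). For $x_0\in\{x,y\}$, $\partial_{x_0}:A/\operatorname{span}\{ab-ba\}\to A$ is given on cyclic words by $\operatorname{tr}(a_1\cdots a_n)\mapsto\sum_{i:\,a_i=x_0}a_{i+1}\cdots a_n\,a_1\cdots a_{i-1}$ ($a_k\in\{x,y\}$), extended linearly; $\partial_{x_0}(\gamma)$ means this map applied to the image of $\gamma$. *)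

theory Defs
  imports Complex_Main
begin

text \<open>Letters of the two-letter alphabet; words are lists of letters.
  An element of A = R<x,y> is a finitely supported function from words to real
  coefficients.\<close>

datatype letter = X | Y

type_synonym word = "letter list"
type_synonym ncpoly = "word \<Rightarrow> real"

definition in_A :: "ncpoly \<Rightarrow> bool" where
  "in_A p \<longleftrightarrow> finite {w. p w \<noteq> 0}"

definition gen :: "letter \<Rightarrow> ncpoly" where
  "gen a = (\<lambda>w. if w = [a] then 1 else 0)"

definition ncadd :: "ncpoly \<Rightarrow> ncpoly \<Rightarrow> ncpoly" where
  "ncadd p q = (\<lambda>w. p w + q w)"

definition ncscale :: "real \<Rightarrow> ncpoly \<Rightarrow> ncpoly" where
  "ncscale c p = (\<lambda>w. c * p w)"

definition ncmul :: "ncpoly \<Rightarrow> ncpoly \<Rightarrow> ncpoly" where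
  "ncmul p q = (\<lambda>w. \<Sum>i\<le>length w. p (take i w) * q (drop i w))"

definition commutator :: "ncpoly \<Rightarrow> ncpoly \<Rightarrow> ncpoly" where
  "commutator a b = (\<lambda>w. ncmul a b w - ncmul b a w)"

inductive_set freeLie :: "ncpoly set" where
  gen_x: "gen X \<in> freeLie"
| gen_y: "gen Y \<in> freeLie"
| zero: "(\<lambda>w. 0) \<in> freeLie"
| add: "a \<in> freeLie \<Longrightarrow> b \<in> freeLie \<Longrightarrow> ncadd a b \<in> freeLie"
| scale: "a \<in> freeLie \<Longrightarrow> ncscale c a \<in> freeLie"
| bracket: "a \<in> freeLie \<Longrightarrow> b \<in> freeLie \<Longrightarrow> commutator a b \<in> freeLie"

text \<open>span{ a b : a, b in L }, the preimage in A of F(L).\<close>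
inductive_set LL_span :: "ncpoly set" where
  zero: "(\<lambda>w. 0) \<in> LL_span"
| prod: "a \<in> freeLie \<Longrightarrow> b \<in> freeLie \<Longrightarrow> ncmul a b \<in> LL_span"
| add: "p \<in> LL_span \<Longrightarrow> q \<in> LL_span \<Longrightarrow> ncadd p q \<in> LL_span"
| scale: "p \<in> LL_span \<Longrightarrow> ncscale c p \<in> LL_span"

text \<open>The trace map A \<rightarrow> A/span{ab-ba}.  The quotient is modelled concretely as
  functions on words constant on rotation classes (cyclic words): tr p w is the sum of
  the coefficients of p over the cyclic class of w.  Its kernel is exactly
  span{ab - ba}, so this is (an isomorphic copy of) the quotient map.\<close>
definition tr :: "ncpoly \<Rightarrow> ncpoly" where
  "tr p = (\<lambda>w. \<Sum>v\<in>range (\<lambda>i. rotate i w). p v)"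

text \<open>F(L) as a subspace of A/span{ab-ba}: image of a (x) b \<mapsto> tr(ab).\<close>
definition FL :: "ncpoly set" where
  "FL = tr ` LL_span"

text \<open>The cyclic derivative formula on words, extended linearly to A:
  a_1...a_n \<mapsto> sum over i with a_i = x0 of a_{i+1}...a_n a_1...a_{i-1}.
  Output words of length m come from input words of length m+1.\<close>
definition cyc_deriv_word :: "letter \<Rightarrow> ncpoly \<Rightarrow> ncpoly" where
  "cyc_deriv_word x0 p = (\<lambda>u. \<Sum>w\<in>{w. length w = Suc (length u)}.
      p w * real (card {i. i < length w \<and> w ! i = x0 \<and> drop (Suc i) w @ take i w = u}))"

definition cyc_deriv :: "letter \<Rightarrow> ncpoly \<Rightarrow> ncpoly" where
  "cyc_deriv x0 \<gamma> = cyc_deriv_word x0 (SOME p. in_A p \<and> tr p = \<gamma>)"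

end

theory Submission
  imports Defs
begin

definition sp2 :: "word \<Rightarrow> (word \<times> word) set" where
  "sp2 w = {(u,v). u @ v = w}"
definition sp3 :: "word \<Rightarrow> (word \<times> word \<times> word) set" where
  "sp3 w = {(u,v,z). u @ v @ z = w}"

lemma fin_lists_w: "finite {xs. set xs \<subseteq> set w \<and> length xs \<le> length w}"
  by (rule finite_lists_length_le) simp

lemma fin_sp2[simp]: "finite (sp2 w)"
proof -
  let ?L = "{xs. set xs \<subseteq> set w \<and> length xs \<le> length w}"
  have sub: "sp2 w \<subseteq> ?L \<times> ?L" unfolding sp2_def by auto
  have "finite (?L \<times> ?L)" using fin_lists_w by (intro finite_cartesian_product)
  thus ?thesis by (rule finite_subset[OF sub])
qed

lemma fin_sp3[simp]: "finite (sp3 w)"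
proof -
  let ?L = "{xs. set xs \<subseteq> set w \<and> length xs \<le> length w}"
  have sub: "sp3 w \<subseteq> ?L \<times> ?L \<times> ?L" unfolding sp3_def by auto
  have "finite (?L \<times> ?L \<times> ?L)" using fin_lists_w by (intro finite_cartesian_product)
  thus ?thesis by (rule finite_subset[OF sub])
qed

lemma sp2_img: "sp2 w = (\<lambda>i. (take i w, drop i w)) ` {..length w}"
proof
  show "sp2 w \<subseteq> (\<lambda>i. (take i w, drop i w)) ` {..length w}"
  proof
    fix z assume "z \<in> sp2 w"
    then obtain a b where "z = (a,b)" "a @ b = w" unfolding sp2_def by auto
    thus "z \<in> (\<lambda>i. (take i w, drop i w)) ` {..length w}"
      by (auto simp: image_iff intro!: bexI[of _ "length a"])
  qed
qed (auto simp: sp2_def)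

lemma sum_sp2: "(\<Sum>i\<le>length w. f (take i w) (drop i w)) = (\<Sum>(u,v)\<in>sp2 w. f u v)"
proof -
  have "inj_on (\<lambda>i. (take i w, drop i w)) {..length w}"
  proof (rule inj_onI)
    fix i j assume i: "i \<in> {..length w}" and j: "j \<in> {..length w}"
      and e: "(take i w, drop i w) = (take j w, drop j w)"
    hence "length (take i w) = length (take j w)" by simp
    thus "i = j" using i j by simp
  qed
  thus ?thesis unfolding sp2_img by (simp add: sum.reindex)
qed

lemma ncmul_sp2: "ncmul p q w = (\<Sum>(u,v)\<in>sp2 w. p u * q v)"
  unfolding ncmul_def using sum_sp2[where w=w and f="\<lambda>u v. p u * q v"] by simp

lemma univ_letter: "(UNIV :: letter set) = {X, Y}"
  using letter.exhaust by auto

lemma cyc_sp2: "cyc_deriv_word x0 p u = (\<Sum>(t,s)\<in>sp2 u. p (s @ x0 # t))"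
proof -
  let ?W = "{w::word. length w = Suc (length u)}"
  let ?I = "\<lambda>w. {i. i < length w \<and> w ! i = x0 \<and> drop (Suc i) w @ take i w = u}"
  have finW: "finite ?W"
  proof -
    have "finite (UNIV::letter set)" by (simp add: univ_letter)
    from finite_lists_length_eq[OF this, of "Suc (length u)"] show ?thesis by simp
  qed
  have finI: "\<And>w. finite (?I w)" by simp
  have "cyc_deriv_word x0 p u = (\<Sum>w\<in>?W. \<Sum>i\<in>?I w. p w)"
    unfolding cyc_deriv_word_def by (simp add: mult.commute)
  also have "\<dots> = (\<Sum>z\<in>Sigma ?W ?I. p (fst z))"
    by (subst sum.Sigma) (use finW in \<open>auto simp: case_prod_beta\<close>)
  also have "\<dots> = (\<Sum>z\<in>(\<lambda>(t,s). (s @ x0 # t, length s)) ` sp2 u. p (fst z))"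
  proof (rule sum.cong)
    show "Sigma ?W ?I = (\<lambda>(t,s). (s @ x0 # t, length s)) ` sp2 u"
    proof
      show "Sigma ?W ?I \<subseteq> (\<lambda>(t,s). (s @ x0 # t, length s)) ` sp2 u"
      proof
        fix z assume z: "z \<in> Sigma ?W ?I"
        obtain w i where zz: "z = (w,i)" by force
        have i: "i < length w" "w ! i = x0" "drop (Suc i) w @ take i w = u" using z zz by auto
        have "w = take i w @ x0 # drop (Suc i) w" using i id_take_nth_drop by metis
        moreover have "length (take i w) = i" using i by simp
        ultimately show "z \<in> (\<lambda>(t,s). (s @ x0 # t, length s)) ` sp2 u"
          unfolding sp2_def using zz i
          by (intro rev_image_eqI[of "(drop (Suc i) w, take i w)"]) auto
      qed
      show "(\<lambda>(t,s). (s @ x0 # t, length s)) ` sp2 u \<subseteq> Sigma ?W ?I"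
        unfolding sp2_def by auto
    qed
  qed simp
  also have "\<dots> = (\<Sum>(t,s)\<in>sp2 u. p (s @ x0 # t))"
  proof (subst sum.reindex)
    show "inj_on (\<lambda>(t,s). (s @ x0 # t, length s)) (sp2 u)"
      by (rule inj_onI) (auto simp: append_eq_append_conv)
  qed (simp add: case_prod_beta)
  finally show ?thesis .
qed


lemma cyc_rot: "cyc_deriv_word x0 p u = (\<Sum>k<length (u @ [x0]). p (rotate k (u @ [x0])))"
proof -
  have "cyc_deriv_word x0 p u = (\<Sum>j\<le>length u. p (drop j u @ x0 # take j u))"
    unfolding cyc_sp2 using sum_sp2[where w=u and f="\<lambda>t s. p (s @ x0 # t)"] by simp
  also have "\<dots> = (\<Sum>k<length (u @ [x0]). p (rotate k (u @ [x0])))"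
    unfolding length_append_singleton lessThan_Suc_atMost
  proof (rule sum.cong)
    fix k assume k: "k \<in> {..length u}"
    hence "k mod length (u @ [x0]) = k" by simp
    hence "rotate k (u @ [x0]) = drop k (u @ [x0]) @ take k (u @ [x0])"
      by (simp add: rotate_drop_take)
    also have "\<dots> = drop k u @ x0 # take k u" using k by simp
    finally show "p (drop k u @ x0 # take k u) = p (rotate k (u @ [x0]))" by simp
  qed simp
  finally show ?thesis .
qed

lemma sum_shift_periodic:
  fixes g :: "nat \<Rightarrow> real" and n j :: nat
  assumes "\<And>k. g (k + n) = (g k :: real)"
  shows "(\<Sum>k<n. g (k + j)) = (\<Sum>k<n. g k)"
proof (induction j)
  case 0 thus ?case by simp
next
  case (Suc j)
  have "(\<Sum>k<n. g (k + Suc j)) = (\<Sum>k<n. g (Suc k + j))" by simp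
  also have "\<dots> = (\<Sum>k<n. g (k + j))"
  proof -
    have "(\<Sum>k<Suc n. g (k + j)) = g j + (\<Sum>k<n. g (Suc k + j))"
      by (subst sum.lessThan_Suc_shift) simp
    moreover have "(\<Sum>k<Suc n. g (k + j)) = (\<Sum>k<n. g (k + j)) + g (n + j)"
      by simp
    moreover have "g (n + j) = g j" using assms[of j] by (simp add: add.commute)
    ultimately show ?thesis by simp
  qed
  finally show ?case using Suc by simp
qed

lemma inj_rotate: "inj (rotate k)"
proof (induction k)
  case 0 thus ?case by simp
next
  case (Suc k)
  have "rotate (Suc k) = rotate1 \<circ> rotate k" by (rule ext) simp
  thus ?case using inj_rotate1 Suc inj_compose by metis
qed

lemma rot_zero:
  assumes nz: "z \<noteq> []" and tr0: "(\<Sum>v\<in>range (\<lambda>i. rotate i z). r v) = (0::real)"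
  shows "(\<Sum>k<length z. r (rotate k z)) = 0"
proof -
  define n where "n = length z"
  define R where "R = range (\<lambda>i. rotate i z)"
  have n0: "n > 0" using nz n_def by simp
  have R: "R = (\<lambda>i. rotate i z) ` {..<n}"
  proof
    show "R \<subseteq> (\<lambda>i. rotate i z) ` {..<n}"
    proof
      fix v assume "v \<in> R"
      then obtain i where "v = rotate i z" unfolding R_def by auto
      hence "v = rotate (i mod n) z" using rotate_conv_mod n_def by metis
      thus "v \<in> (\<lambda>i. rotate i z) ` {..<n}" using n0 by auto
    qed
  qed (auto simp: R_def)
  have finR: "finite R" using R by simp
  have Rne: "R \<noteq> {}" using R n0 by auto
  have per: "\<And>k. rotate (k + n) z = rotate k z"
    by (metis mod_add_self2 n_def rotate_conv_mod)
  have a: "\<And>v. v \<in> R \<Longrightarrow> (\<Sum>k<n. r (rotate k v)) = (\<Sum>k<n. r (rotate k z))"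
  proof -
    fix v assume "v \<in> R"
    then obtain j where v: "v = rotate j z" unfolding R_def by auto
    have "(\<Sum>k<n. r (rotate k v)) = (\<Sum>k<n. r (rotate (k + j) z))"
      by (simp add: v rotate_rotate)
    also have "\<dots> = (\<Sum>k<n. r (rotate k z))"
      by (rule sum_shift_periodic[where g="\<lambda>k. r (rotate k z)"]) (simp add: per)
    finally show "(\<Sum>k<n. r (rotate k v)) = (\<Sum>k<n. r (rotate k z))" .
  qed
  have b: "\<And>k. (\<Sum>v\<in>R. r (rotate k v)) = 0"
  proof -
    fix k
    have sub: "rotate k ` R \<subseteq> R" unfolding R_def by (auto simp: rotate_rotate)
    have inj: "inj_on (rotate k) R" using inj_rotate by (metis inj_on_subset subset_UNIV)
    have eq: "rotate k ` R = R" using endo_inj_surj[OF finR sub inj] .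
    have "(\<Sum>v\<in>R. r (rotate k v)) = (\<Sum>v\<in>rotate k ` R. r v)"
      using inj by (simp add: sum.reindex)
    also have "\<dots> = 0" using eq tr0 R_def by simp
    finally show "(\<Sum>v\<in>R. r (rotate k v)) = 0" .
  qed
  have "real (card R) * (\<Sum>k<n. r (rotate k z)) = (\<Sum>v\<in>R. \<Sum>k<n. r (rotate k v))"
    using a by simp
  also have "\<dots> = (\<Sum>k<n. \<Sum>v\<in>R. r (rotate k v))" by (rule sum.swap)
  also have "\<dots> = 0" using b by simp
  finally have "real (card R) * (\<Sum>k<n. r (rotate k z)) = 0" .
  moreover have "card R > 0" using finR Rne by (simp add: card_gt_0_iff)
  ultimately show ?thesis using n_def by simp
qed

lemma cyc_tr_eq:
  assumes "tr p = tr q"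
  shows "cyc_deriv_word x0 p = cyc_deriv_word x0 q"
proof
  fix u
  let ?z = "u @ [x0]"
  have "(\<Sum>v\<in>range (\<lambda>i. rotate i ?z). p v - q v) = tr p ?z - tr q ?z"
    unfolding tr_def by (simp add: sum_subtractf)
  also have "\<dots> = 0" using assms by simp
  finally have "(\<Sum>k<length ?z. p (rotate k ?z) - q (rotate k ?z)) = 0"
    by (intro rot_zero[where r="\<lambda>v. p v - q v"]) simp_all
  thus "cyc_deriv_word x0 p u = cyc_deriv_word x0 q u"
    unfolding cyc_rot by (simp add: sum_subtractf)
qed


definition phi :: "letter \<Rightarrow> ncpoly \<Rightarrow> ncpoly \<Rightarrow> ncpoly" where
  "phi x0 a c = (\<lambda>w. \<Sum>(v,m,u)\<in>sp3 w. a (u @ x0 # v) * c m)"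

lemma sum_split2:
  assumes "finite A1" "finite A2" "inj_on f1 A1" "inj_on f2 A2"
    "f1 ` A1 \<inter> f2 ` A2 = {}" "S = f1 ` A1 \<union> f2 ` A2"
  shows "sum g S = sum (g \<circ> f1) A1 + sum (g \<circ> f2) A2"
proof -
  have "sum g S = sum g (f1 ` A1) + sum g (f2 ` A2)"
    unfolding assms(6) using assms(1,2,5) by (intro sum.union_disjoint) auto
  also have "sum g (f1 ` A1) = sum (g \<circ> f1) A1" using assms(3) by (rule sum.reindex)
  also have "sum g (f2 ` A2) = sum (g \<circ> f2) A2" using assms(4) by (rule sum.reindex)
  finally show ?thesis .
qed

lemma cyc_mul: "cyc_deriv_word x0 (ncmul a b) w = phi x0 a b w + phi x0 b a w"
proof -
  define S where "S = Sigma (sp2 w) (\<lambda>(t,s). sp2 (s @ x0 # t))"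
  define g where "g = (\<lambda>z::(word\<times>word)\<times>(word\<times>word). a (fst (snd z)) * b (snd (snd z)))"
  define f1 where "f1 = (\<lambda>(v,m,u). ((v, m @ u), (m, u @ x0 # v)))"
  define f2 where "f2 = (\<lambda>(v,m,u). ((v @ m, u), (u @ x0 # v, m)))"
  have "cyc_deriv_word x0 (ncmul a b) w = (\<Sum>(t,s)\<in>sp2 w. \<Sum>(\<alpha>,\<beta>)\<in>sp2 (s @ x0 # t). a \<alpha> * b \<beta>)"
    unfolding cyc_sp2 ncmul_sp2 by simp
  also have "\<dots> = (\<Sum>x\<in>sp2 w. \<Sum>y\<in>(\<lambda>(t,s). sp2 (s @ x0 # t)) x. a (fst y) * b (snd y))"
    by (simp add: case_prod_beta)
  also have "\<dots> = (\<Sum>(x,y)\<in>S. a (fst y) * b (snd y))"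
    unfolding S_def by (rule sum.Sigma) auto
  also have "\<dots> = sum g S"
    by (simp add: g_def case_prod_beta)
  also have "\<dots> = sum (g \<circ> f1) (sp3 w) + sum (g \<circ> f2) (sp3 w)"
  proof (rule sum_split2)
    show "inj_on f1 (sp3 w)" unfolding f1_def by (rule inj_onI) auto
    show "inj_on f2 (sp3 w)" unfolding f2_def by (rule inj_onI) auto
    show "f1 ` sp3 w \<inter> f2 ` sp3 w = {}"
    proof -
      have "f1 p \<noteq> f2 q" for p q
      proof -
        obtain v m u where p: "p = (v,m,u)" by (cases p) auto
        obtain v' m' u' where q: "q = (v',m',u')" by (cases q) auto
        show ?thesis
        proof
          assume "f1 p = f2 q"
          hence "f1 (v,m,u) = f2 (v',m',u')" unfolding p q .
          hence E: "f1 (v,m,u) = f2 (v',m',u')" .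
          have "length (fst (snd (f1 (v,m,u)))) = length (fst (snd (f2 (v',m',u'))))"
            using E by (rule arg_cong)
          hence L1: "length m = Suc (length u' + length v')" by (simp add: f1_def f2_def)
          have "length (snd (fst (f1 (v,m,u)))) = length (snd (fst (f2 (v',m',u'))))"
            using E by (rule arg_cong)
          hence L2: "length m + length u = length u'" by (simp add: f1_def f2_def)
          from L1 L2 show False by simp
        qed
      qed
      thus ?thesis by blast
    qed
    show "S = f1 ` sp3 w \<union> f2 ` sp3 w"
    proof
      show "f1 ` sp3 w \<union> f2 ` sp3 w \<subseteq> S"
        unfolding f1_def f2_def S_def sp3_def sp2_def by auto
      show "S \<subseteq> f1 ` sp3 w \<union> f2 ` sp3 w"
      proof
        fix z assume "z \<in> S"
        then obtain t s \<alpha> \<beta> where z: "z = ((t,s),(\<alpha>,\<beta>))" "t @ s = w" "\<alpha> @ \<beta> = s @ x0 # t"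
          unfolding S_def sp2_def by auto
        then obtain us where "(\<alpha> = s @ us \<and> us @ \<beta> = x0 # t) \<or> (\<alpha> @ us = s \<and> \<beta> = us @ x0 # t)"
          using z(3) append_eq_append_conv2[of \<alpha> \<beta> s "x0 # t"] by blast
        thus "z \<in> f1 ` sp3 w \<union> f2 ` sp3 w"
        proof (elim disjE conjE)
          assume h: "\<alpha> @ us = s" "\<beta> = us @ x0 # t"
          have "z = f1 (t, \<alpha>, us)" using h z unfolding f1_def by simp
          moreover have "(t, \<alpha>, us) \<in> sp3 w" using h z unfolding sp3_def by auto
          ultimately show ?thesis by blast
        next
          assume h: "\<alpha> = s @ us" "us @ \<beta> = x0 # t"
          show ?thesis
          proof (cases us)
            case Nil
            hence "z = f1 (t, s, [])" using h z unfolding f1_def by simp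
            moreover have "(t, s, []) \<in> sp3 w" using z unfolding sp3_def by auto
            ultimately show ?thesis by blast
          next
            case (Cons c us')
            hence c: "c = x0" "us' @ \<beta> = t" using h by auto
            hence "z = f2 (us', \<beta>, s)" using h z Cons unfolding f2_def by simp
            moreover have "(us', \<beta>, s) \<in> sp3 w" using z c unfolding sp3_def by auto
            ultimately show ?thesis by blast
          qed
        qed
      qed
    qed
  qed simp_all
  also have "\<dots> = phi x0 b a w + phi x0 a b w"
    unfolding phi_def g_def f1_def f2_def
    by (simp add: case_prod_beta o_def mult.commute)
  finally show ?thesis by simp
qed


lemma phi_Sigma:
  "phi x0 a (ncmul b c) w = (\<Sum>z\<in>Sigma (sp3 w) (\<lambda>(v,m,u). sp2 m).
      a (snd (snd (fst z)) @ x0 # fst (fst z)) * (b (fst (snd z)) * c (snd (snd z))))"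
proof -
  have "phi x0 a (ncmul b c) w = (\<Sum>x\<in>sp3 w. \<Sum>y\<in>(\<lambda>(v,m,u). sp2 m) x.
      a (snd (snd x) @ x0 # fst x) * (b (fst y) * c (snd y)))"
    unfolding phi_def ncmul_sp2 by (simp add: case_prod_beta sum_distrib_left)
  also have "\<dots> = (\<Sum>(x,y)\<in>Sigma (sp3 w) (\<lambda>(v,m,u). sp2 m).
      a (snd (snd x) @ x0 # fst x) * (b (fst y) * c (snd y)))"
    by (rule sum.Sigma) auto
  finally show ?thesis by (simp add: case_prod_beta)
qed

lemma phi_mul: "phi x0 (ncmul a1 a2) c w = phi x0 a1 (ncmul a2 c) w + phi x0 a2 (ncmul c a1) w"
proof -
  define S where "S = Sigma (sp3 w) (\<lambda>(v,m,u). sp2 (u @ x0 # v))"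
  define A where "A = Sigma (sp3 w) (\<lambda>(v,m,u). sp2 m)"
  define g where "g = (\<lambda>z::(word\<times>word\<times>word)\<times>(word\<times>word).
     a1 (fst (snd z)) * a2 (snd (snd z)) * c (fst (snd (fst z))))"
  define f1 where "f1 = (\<lambda>((v::word,m'::word,u::word),(\<beta>::word,m::word)). ((v @ \<beta>, m, u), (u @ x0 # v, \<beta>)))"
  define f2 where "f2 = (\<lambda>((v::word,m'::word,u::word),(m::word,\<alpha>::word)). ((v, m, \<alpha> @ u), (\<alpha>, u @ x0 # v)))"
  have finA: "finite A" unfolding A_def by (rule finite_SigmaI) auto
  have "phi x0 (ncmul a1 a2) c w = (\<Sum>x\<in>sp3 w. \<Sum>y\<in>(\<lambda>(v,m,u). sp2 (u @ x0 # v)) x.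
      a1 (fst y) * a2 (snd y) * c (fst (snd x)))"
    unfolding phi_def ncmul_sp2 by (simp add: case_prod_beta sum_distrib_right)
  also have "\<dots> = (\<Sum>(x,y)\<in>S. a1 (fst y) * a2 (snd y) * c (fst (snd x)))"
    unfolding S_def by (rule sum.Sigma) auto
  also have "\<dots> = sum g S"
    by (simp add: g_def case_prod_beta)
  also have "\<dots> = sum (g \<circ> f1) A + sum (g \<circ> f2) A"
  proof (rule sum_split2)
    show "finite A" by (rule finA)
    show "finite A" by (rule finA)
    show "inj_on f1 A"
    proof (rule inj_onI)
      fix p q assume p: "p \<in> A" and q: "q \<in> A" and e: "f1 p = f1 q"
      obtain v1 m1 u1 b1 n1 where p': "p = ((v1,m1,u1),(b1,n1))" "b1 @ n1 = m1"
        using p unfolding A_def sp2_def by auto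
      obtain v2 m2 u2 b2 n2 where q': "q = ((v2,m2,u2),(b2,n2))" "b2 @ n2 = m2"
        using q unfolding A_def sp2_def by auto
      have fp: "f1 p = ((v1 @ b1, n1, u1), (u1 @ x0 # v1, b1))" unfolding p' f1_def by simp
      have fq: "f1 q = ((v2 @ b2, n2, u2), (u2 @ x0 # v2, b2))" unfolding q' f1_def by simp
      have E: "((v1 @ b1, n1, u1), (u1 @ x0 # v1, b1)) = ((v2 @ b2, n2, u2), (u2 @ x0 # v2, b2))"
        by (rule trans[OF trans[OF fp[symmetric] e] fq])
      have c1: "u1 = u2" using arg_cong[OF E, of "\<lambda>z. snd (snd (fst z))"] by simp
      have c2: "n1 = n2" using arg_cong[OF E, of "\<lambda>z. fst (snd (fst z))"] by simp
      have c3: "b1 = b2" using arg_cong[OF E, of "\<lambda>z. snd (snd z)"] by simp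
      have c4: "u1 @ x0 # v1 = u2 @ x0 # v2" using arg_cong[OF E, of "\<lambda>z. fst (snd z)"] by simp
      have "v1 = v2" using c1 c4 by simp
      note c = this c2 c1 c3
      thus "p = q" using p' q' c by simp
    qed
    show "inj_on f2 A"
    proof (rule inj_onI)
      fix p q assume p: "p \<in> A" and q: "q \<in> A" and e: "f2 p = f2 q"
      obtain v1 m1 u1 b1 n1 where p': "p = ((v1,m1,u1),(b1,n1))" "b1 @ n1 = m1"
        using p unfolding A_def sp2_def by auto
      obtain v2 m2 u2 b2 n2 where q': "q = ((v2,m2,u2),(b2,n2))" "b2 @ n2 = m2"
        using q unfolding A_def sp2_def by auto
      have fp: "f2 p = ((v1, b1, n1 @ u1), (n1, u1 @ x0 # v1))" unfolding p' f2_def by simp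
      have fq: "f2 q = ((v2, b2, n2 @ u2), (n2, u2 @ x0 # v2))" unfolding q' f2_def by simp
      have E: "((v1, b1, n1 @ u1), (n1, u1 @ x0 # v1)) = ((v2, b2, n2 @ u2), (n2, u2 @ x0 # v2))"
        by (rule trans[OF trans[OF fp[symmetric] e] fq])
      have c1: "v1 = v2" using arg_cong[OF E, of "\<lambda>z. fst (fst z)"] by simp
      have c2: "b1 = b2" using arg_cong[OF E, of "\<lambda>z. fst (snd (fst z))"] by simp
      have c3: "n1 = n2" using arg_cong[OF E, of "\<lambda>z. fst (snd z)"] by simp
      have c4: "n1 @ u1 = n2 @ u2" using arg_cong[OF E, of "\<lambda>z. snd (snd (fst z))"] by simp
      have "u1 = u2" using c3 c4 by simp
      note c = c1 c3 this c2
      thus "p = q" using p' q' by simp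
    qed
    show "f1 ` A \<inter> f2 ` A = {}"
    proof -
      have "f1 p \<noteq> f2 q" for p q
      proof -
        obtain v m' u b m where p: "p = ((v,m',u),(b,m))" by (cases p) auto
        obtain v2 m2' u2 m2 al where q: "q = ((v2,m2',u2),(m2,al))" by (cases q) auto
        show ?thesis
        proof
          assume "f1 p = f2 q"
          hence E: "f1 ((v,m',u),(b,m)) = f2 ((v2,m2',u2),(m2,al))" unfolding p q .
          have "length (fst (snd (f1 ((v,m',u),(b,m))))) = length (fst (snd (f2 ((v2,m2',u2),(m2,al)))))"
            using E by (rule arg_cong)
          hence L1: "Suc (length u + length v) = length al" by (simp add: f1_def f2_def)
          have "length (snd (snd (fst (f1 ((v,m',u),(b,m)))))) = length (snd (snd (fst (f2 ((v2,m2',u2),(m2,al))))))"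
            using E by (rule arg_cong)
          hence L2: "length u = length al + length u2" by (simp add: f1_def f2_def)
          from L1 L2 show False by simp
        qed
      qed
      thus ?thesis by blast
    qed
    show "S = f1 ` A \<union> f2 ` A"
    proof
      show "f1 ` A \<union> f2 ` A \<subseteq> S"
      proof
        fix z assume "z \<in> f1 ` A \<union> f2 ` A"
        then consider p where "p \<in> A" "z = f1 p" | p where "p \<in> A" "z = f2 p" by blast
        thus "z \<in> S"
        proof cases
          case 1
          then obtain v m' u b m where p: "z = f1 ((v,m',u),(b,m))" "v @ m' @ u = w" "b @ m = m'"
            unfolding A_def sp2_def sp3_def by auto
          thus ?thesis unfolding S_def f1_def sp2_def sp3_def by auto
        next
          case 2
          then obtain v m' u m al where p: "z = f2 ((v,m',u),(m,al))" "v @ m' @ u = w" "m @ al = m'"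
            unfolding A_def sp2_def sp3_def by auto
          thus ?thesis unfolding S_def f2_def sp2_def sp3_def by auto
        qed
      qed
      show "S \<subseteq> f1 ` A \<union> f2 ` A"
      proof
        fix z assume "z \<in> S"
        then obtain v m u \<alpha> \<beta> where z: "z = ((v,m,u),(\<alpha>,\<beta>))" "v @ m @ u = w" "\<alpha> @ \<beta> = u @ x0 # v"
          unfolding S_def sp2_def sp3_def by auto
        then obtain us where "(\<alpha> = u @ us \<and> us @ \<beta> = x0 # v) \<or> (\<alpha> @ us = u \<and> \<beta> = us @ x0 # v)"
          using z(3) append_eq_append_conv2[of \<alpha> \<beta> u "x0 # v"] by blast
        thus "z \<in> f1 ` A \<union> f2 ` A"
        proof (elim disjE conjE)
          assume h: "\<alpha> @ us = u" "\<beta> = us @ x0 # v"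
          have "z = f2 ((v, m @ \<alpha>, us), (m, \<alpha>))" using h z unfolding f2_def by simp
          moreover have "((v, m @ \<alpha>, us), (m, \<alpha>)) \<in> A" using h z unfolding A_def sp2_def sp3_def by auto
          ultimately show ?thesis by blast
        next
          assume h: "\<alpha> = u @ us" "us @ \<beta> = x0 # v"
          show ?thesis
          proof (cases us)
            case Nil
            hence "z = f2 ((v, m @ \<alpha>, []), (m, \<alpha>))" using h z unfolding f2_def by simp
            moreover have "((v, m @ \<alpha>, []), (m, \<alpha>)) \<in> A" using h z Nil unfolding A_def sp2_def sp3_def by auto
            ultimately show ?thesis by blast
          next
            case (Cons c' us')
            hence c: "c' = x0" "us' @ \<beta> = v" using h by auto
            hence "z = f1 ((us', \<beta> @ m, u), (\<beta>, m))" using h z Cons unfolding f1_def by simp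
            moreover have "((us', \<beta> @ m, u), (\<beta>, m)) \<in> A" using z c unfolding A_def sp2_def sp3_def by auto
            ultimately show ?thesis by blast
          qed
        qed
      qed
    qed
  qed
  also have "sum (g \<circ> f1) A = phi x0 a1 (ncmul a2 c) w"
    unfolding phi_Sigma A_def
    by (rule sum.cong) (auto simp: g_def f1_def case_prod_beta)
  also have "sum (g \<circ> f2) A = phi x0 a2 (ncmul c a1) w"
    unfolding phi_Sigma A_def
    by (rule sum.cong) (auto simp: g_def f2_def case_prod_beta)
  finally show ?thesis .
qed


lemma cyc_add: "cyc_deriv_word x0 (ncadd p q) = ncadd (cyc_deriv_word x0 p) (cyc_deriv_word x0 q)"
  unfolding ncadd_def by (rule ext) (simp add: cyc_sp2 case_prod_beta sum.distrib)

lemma cyc_scale: "cyc_deriv_word x0 (ncscale k p) = ncscale k (cyc_deriv_word x0 p)"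
  unfolding ncscale_def by (rule ext) (simp add: cyc_sp2 case_prod_beta sum_distrib_left)

lemma cyc_zero: "cyc_deriv_word x0 (\<lambda>w. 0) = (\<lambda>w. 0)"
  by (rule ext) (simp add: cyc_sp2 case_prod_beta)

lemma phi_add1: "phi x0 (ncadd a b) c = ncadd (phi x0 a c) (phi x0 b c)"
  unfolding ncadd_def phi_def by (rule ext) (simp add: case_prod_beta sum.distrib distrib_right)

lemma phi_scale1: "phi x0 (ncscale k a) c = ncscale k (phi x0 a c)"
  unfolding ncscale_def phi_def by (rule ext) (simp add: case_prod_beta sum_distrib_left mult.assoc)

lemma phi_zero1: "phi x0 (\<lambda>w. 0) c = (\<lambda>w. 0)"
  unfolding phi_def by (rule ext) (simp add: case_prod_beta)

lemma phi_diff1: "phi x0 (\<lambda>w. a w - b w) c w = phi x0 a c w - phi x0 b c w"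
  unfolding phi_def by (simp add: case_prod_beta sum_subtractf left_diff_distrib)

lemma phi_diff2: "phi x0 a (\<lambda>w. c w - d w) w = phi x0 a c w - phi x0 a d w"
  unfolding phi_def by (simp add: case_prod_beta sum_subtractf right_diff_distrib)

lemma phi_gen: "phi x0 (gen l) c = (if l = x0 then c else (\<lambda>w. 0))"
proof (rule ext)
  fix w
  have "phi x0 (gen l) c w = (\<Sum>z\<in>sp3 w. if z = ([], w, []) then (if l = x0 then c w else 0) else 0)"
    unfolding phi_def
  proof (rule sum.cong)
    fix z assume z: "z \<in> sp3 w"
    obtain v m u where zz: "z = (v,m,u)" by (cases z) auto
    have vmu: "v @ m @ u = w" using z zz unfolding sp3_def by simp
    show "(case z of (v, m, u) \<Rightarrow> gen l (u @ x0 # v) * c m) =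
      (if z = ([], w, []) then (if l = x0 then c w else 0) else 0)"
    proof (cases "u = [] \<and> v = []")
      case True
      thus ?thesis using zz vmu by (simp add: gen_def)
    next
      case False
      hence "u @ x0 # v \<noteq> [l]" by (cases u) auto
      thus ?thesis using zz False by (auto simp: gen_def)
    qed
  qed simp
  also have "\<dots> = (if l = x0 then c w else 0)"
    by (subst sum.delta[OF fin_sp3]) (auto simp: sp3_def)
  finally show "phi x0 (gen l) c w = (if l = x0 then c else (\<lambda>w. 0)) w" by simp
qed

lemma freeLie_diff: "a \<in> freeLie \<Longrightarrow> b \<in> freeLie \<Longrightarrow> (\<lambda>w. a w - b w) \<in> freeLie"
proof -
  assume "a \<in> freeLie" "b \<in> freeLie"
  hence "ncadd a (ncscale (-1) b) \<in> freeLie" by (intro freeLie.add freeLie.scale)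
  moreover have "ncadd a (ncscale (-1) b) = (\<lambda>w. a w - b w)"
    unfolding ncadd_def ncscale_def by (rule ext) simp
  ultimately show ?thesis by simp
qed

lemma phi_comm: "phi x0 (commutator a1 a2) c =
   (\<lambda>w. phi x0 a1 (commutator a2 c) w - phi x0 a2 (commutator a1 c) w)"
proof (rule ext)
  fix w
  have "phi x0 (commutator a1 a2) c w = phi x0 (ncmul a1 a2) c w - phi x0 (ncmul a2 a1) c w"
    unfolding commutator_def by (rule phi_diff1)
  also have "\<dots> = (phi x0 a1 (ncmul a2 c) w + phi x0 a2 (ncmul c a1) w)
      - (phi x0 a2 (ncmul a1 c) w + phi x0 a1 (ncmul c a2) w)"
    by (simp add: phi_mul)
  also have "\<dots> = (phi x0 a1 (ncmul a2 c) w - phi x0 a1 (ncmul c a2) w)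
      - (phi x0 a2 (ncmul a1 c) w - phi x0 a2 (ncmul c a1) w)" by simp
  also have "\<dots> = phi x0 a1 (commutator a2 c) w - phi x0 a2 (commutator a1 c) w"
    unfolding commutator_def by (simp add: phi_diff2)
  finally show "phi x0 (commutator a1 a2) c w =
    phi x0 a1 (commutator a2 c) w - phi x0 a2 (commutator a1 c) w" .
qed

lemma phi_in: "a \<in> freeLie \<Longrightarrow> c \<in> freeLie \<Longrightarrow> phi x0 a c \<in> freeLie"
proof (induction a arbitrary: c rule: freeLie.induct)
  case gen_x thus ?case by (simp add: phi_gen freeLie.zero)
next
  case gen_y thus ?case by (simp add: phi_gen freeLie.zero)
next
  case zero thus ?case by (simp add: phi_zero1 freeLie.zero)
next
  case (add a b) thus ?case by (simp add: phi_add1 freeLie.add)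
next
  case (scale a k) thus ?case by (simp add: phi_scale1 freeLie.scale)
next
  case (bracket a1 a2)
  have "phi x0 a1 (commutator a2 c) \<in> freeLie"
    using bracket by (simp add: freeLie.bracket)
  moreover have "phi x0 a2 (commutator a1 c) \<in> freeLie"
    using bracket by (simp add: freeLie.bracket)
  ultimately show ?case unfolding phi_comm by (rule freeLie_diff)
qed

lemma in_A_ncmul: "in_A p \<Longrightarrow> in_A q \<Longrightarrow> in_A (ncmul p q)"
proof -
  assume p: "in_A p" and q: "in_A q"
  have "{w. ncmul p q w \<noteq> 0} \<subseteq> (\<lambda>(u,v). u @ v) ` ({u. p u \<noteq> 0} \<times> {v. q v \<noteq> 0})"
  proof
    fix w assume "w \<in> {w. ncmul p q w \<noteq> 0}"
    hence "(\<Sum>(u,v)\<in>sp2 w. p u * q v) \<noteq> 0" by (simp add: ncmul_sp2)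
    then obtain z where z: "z \<in> sp2 w" "(case z of (u,v) \<Rightarrow> p u * q v) \<noteq> 0"
      by (meson sum.neutral)
    obtain u v where "z = (u,v)" by (cases z)
    thus "w \<in> (\<lambda>(u,v). u @ v) ` ({u. p u \<noteq> 0} \<times> {v. q v \<noteq> 0})"
      using z unfolding sp2_def by force
  qed
  moreover have "finite ((\<lambda>(u,v). u @ v) ` ({u. p u \<noteq> 0} \<times> {v. q v \<noteq> 0}))"
    using p q unfolding in_A_def by simp
  ultimately show ?thesis unfolding in_A_def by (rule finite_subset)
qed

lemma in_A_add: "in_A p \<Longrightarrow> in_A q \<Longrightarrow> in_A (ncadd p q)"
  unfolding in_A_def ncadd_def
  by (rule finite_subset[of _ "{w. p w \<noteq> 0} \<union> {w. q w \<noteq> 0}"]) auto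

lemma in_A_scale: "in_A p \<Longrightarrow> in_A (ncscale k p)"
  unfolding in_A_def ncscale_def
  by (rule finite_subset[of _ "{w. p w \<noteq> 0}"]) auto

lemma in_A_freeLie: "a \<in> freeLie \<Longrightarrow> in_A a"
proof (induction rule: freeLie.induct)
  case gen_x thus ?case unfolding in_A_def gen_def by simp
next
  case gen_y thus ?case unfolding in_A_def gen_def by simp
next
  case zero thus ?case unfolding in_A_def by simp
next
  case (add a b) thus ?case by (blast intro: in_A_add)
next
  case (scale a c) thus ?case by (blast intro: in_A_scale)
next
  case (bracket a b)
  have "in_A (ncmul a b)" "in_A (ncmul b a)" using bracket in_A_ncmul by auto
  thus ?case unfolding in_A_def commutator_def
    by (rule finite_subset[rotated, OF finite_UnI[of "{w. ncmul a b w \<noteq> 0}" "{w. ncmul b a w \<noteq> 0}"]]) auto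
qed

lemma in_A_LL: "p \<in> LL_span \<Longrightarrow> in_A p"
proof (induction rule: LL_span.induct)
  case zero thus ?case unfolding in_A_def by simp
next
  case (prod a b) thus ?case using in_A_freeLie in_A_ncmul by blast
next
  case (add p q) thus ?case by (blast intro: in_A_add)
next
  case (scale p c) thus ?case by (blast intro: in_A_scale)
qed

lemma cyc_LL: "p \<in> LL_span \<Longrightarrow> cyc_deriv_word x0 p \<in> freeLie"
proof (induction rule: LL_span.induct)
  case zero thus ?case by (simp add: cyc_zero freeLie.zero)
next
  case (prod a b)
  have "cyc_deriv_word x0 (ncmul a b) = ncadd (phi x0 a b) (phi x0 b a)"
    unfolding ncadd_def by (rule ext) (rule cyc_mul)
  thus ?case using prod phi_in freeLie.add by simp
next
  case (add p q) thus ?case by (simp add: cyc_add freeLie.add)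
next
  case (scale p c) thus ?case by (simp add: cyc_scale freeLie.scale)
qed

theorem mainTheorem5:
  fixes \<gamma> :: ncpoly and x0 :: letter
  assumes "\<gamma> \<in> FL"
  shows "cyc_deriv x0 \<gamma> \<in> freeLie"
proof -
  obtain p where p: "p \<in> LL_span" "\<gamma> = tr p" using assms unfolding FL_def by auto
  have ex: "in_A p \<and> tr p = \<gamma>" using p in_A_LL by simp
  define q where "q = (SOME p. in_A p \<and> tr p = \<gamma>)"
  have "in_A q \<and> tr q = \<gamma>" unfolding q_def by (rule someI[of _ p]) (rule ex)
  hence "tr q = tr p" using p by simp
  hence "cyc_deriv x0 \<gamma> = cyc_deriv_word x0 p"
    unfolding cyc_deriv_def q_def[symmetric] by (rule cyc_tr_eq)
  thus ?thesis using cyc_LL[OF p(1)] by simp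
qed

end
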